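(* Let $\mathcal{N}$ be a nested set on a connected graph $\Gamma$ such that the full vertex set of $\Gamma$ is not an element of $\mathcal{N}$. Then there is a vertex $x$ of $\Gamma$ which is not contained in any element of $\mathcal{N}$.
   Context: A nested set on a finite simple graph $\Gamma$ is a collection $\mathcal{N}$ of subsets of the vertex set such that (N1) each $J\in\mathcal{N}$ induces a connected subgraph of $\Gamma$; (N2) for any $I,J\in\mathcal{N}$, either $I\subseteq J$, $J\subseteq I$, or $I\cap J=\emptyset$; (N3) for any $k\geq 2$ pairwise disjoint $J_1,\dots,J_k\in\mathcal{N}$, the induced subgraph on $J_1\cup\cdots\cup J_k$ is not connected. The graph $\Gamma$ itself is identified with its vertex set. *)

theory Defs
  imports Main
begin

definition simple_graph :: "'a set \<Rightarrow> ('a \<Rightarrow> 'a \<Rightarrow> bool) \<Rightarrow> bool" where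
  "simple_graph V E \<longleftrightarrow> finite V \<and> (\<forall>x y. E x y \<longrightarrow> E y x) \<and> (\<forall>x. \<not> E x x)
     \<and> (\<forall>x y. E x y \<longrightarrow> x \<in> V \<and> y \<in> V)"

definition induced_connected :: "('a \<Rightarrow> 'a \<Rightarrow> bool) \<Rightarrow> 'a set \<Rightarrow> bool" where
  "induced_connected E S \<longleftrightarrow> S \<noteq> {} \<and>
     (\<forall>x\<in>S. \<forall>y\<in>S. (\<lambda>u v. u \<in> S \<and> v \<in> S \<and> E u v)\<^sup>*\<^sup>* x y)"

definition nested_set :: "'a set \<Rightarrow> ('a \<Rightarrow> 'a \<Rightarrow> bool) \<Rightarrow> 'a set set \<Rightarrow> bool" where
  "nested_set V E N \<longleftrightarrow>
     (\<forall>J\<in>N. J \<subseteq> V) \<and>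
     (\<forall>J\<in>N. induced_connected E J) \<and>
     (\<forall>I\<in>N. \<forall>J\<in>N. I \<subseteq> J \<or> J \<subseteq> I \<or> I \<inter> J = {}) \<and>
     (\<forall>K. K \<subseteq> N \<longrightarrow> card K \<ge> 2 \<longrightarrow> finite K \<longrightarrow>
        (\<forall>I\<in>K. \<forall>J\<in>K. I \<noteq> J \<longrightarrow> I \<inter> J = {}) \<longrightarrow> \<not> induced_connected E (\<Union>K))"

end

theory Submission
  imports Defs
begin

theorem lemma5p5:
  fixes V :: "'a set" and E :: "'a \<Rightarrow> 'a \<Rightarrow> bool" and N :: "'a set set"
  assumes "simple_graph V E"
    and "induced_connected E V"
    and "nested_set V E N"
    and "V \<notin> N"
  shows "\<exists>x\<in>V. \<forall>J\<in>N. x \<notin> J"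
proof (rule ccontr)
  assume "\<not> ?thesis"
  hence cov: "\<forall>x\<in>V. \<exists>J\<in>N. x \<in> J" by blast
  have fV: "finite V" using assms(1) unfolding simple_graph_def by blast
  have ns: "(\<forall>J\<in>N. J \<subseteq> V) \<and> (\<forall>J\<in>N. induced_connected E J) \<and> (\<forall>I\<in>N. \<forall>J\<in>N. I \<subseteq> J \<or> J \<subseteq> I \<or> I \<inter> J = {}) \<and>
     (\<forall>K. K \<subseteq> N \<longrightarrow> card K \<ge> 2 \<longrightarrow> finite K \<longrightarrow>
        (\<forall>I\<in>K. \<forall>J\<in>K. I \<noteq> J \<longrightarrow> I \<inter> J = {}) \<longrightarrow> \<not> induced_connected E (\<Union>K))"
    using assms(3) unfolding nested_set_def .
  have sub: "\<forall>J\<in>N. J \<subseteq> V" using ns by (rule conjunct1)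
  have nest: "\<forall>I\<in>N. \<forall>J\<in>N. I \<subseteq> J \<or> J \<subseteq> I \<or> I \<inter> J = {}" using ns[THEN conjunct2, THEN conjunct2, THEN conjunct1] .
  have N3: "\<forall>K. K \<subseteq> N \<longrightarrow> card K \<ge> 2 \<longrightarrow> finite K \<longrightarrow>
        (\<forall>I\<in>K. \<forall>J\<in>K. I \<noteq> J \<longrightarrow> I \<inter> J = {}) \<longrightarrow> \<not> induced_connected E (\<Union>K)"
    using ns[THEN conjunct2, THEN conjunct2, THEN conjunct2] .
  have Vne: "V \<noteq> {}" using assms(2) unfolding induced_connected_def by blast
  have fN: "finite N" using sub fV by (metis Pow_iff finite_Pow_iff finite_subset subsetI)
  define K where "K = {J\<in>N. \<forall>I\<in>N. J \<subseteq> I \<longrightarrow> I = J}"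
  have KN: "K \<subseteq> N" unfolding K_def by blast
  have fK: "finite K" using fN KN finite_subset by blast
  have UK: "\<Union>K = V"
  proof
    show "\<Union>K \<subseteq> V" using KN sub by blast
    show "V \<subseteq> \<Union>K"
    proof
      fix x assume "x \<in> V"
      then obtain J where J: "J \<in> N" "x \<in> J" using cov by blast
      obtain M where "M \<in> N" "J \<subseteq> M" "\<forall>b\<in>N. M \<subseteq> b \<longrightarrow> M = b"
        using finite_has_maximal2[OF fN J(1)] by blast
      then show "x \<in> \<Union>K" using J unfolding K_def by blast
    qed
  qed
  have disj: "\<forall>I\<in>K. \<forall>J\<in>K. I \<noteq> J \<longrightarrow> I \<inter> J = {}"
  proof (intro ballI impI)
    fix I J assume I: "I \<in> K" and J: "J \<in> K" and ne: "I \<noteq> J"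
    have "I \<in> N" "J \<in> N" using I J KN by auto
    hence c: "I \<subseteq> J \<or> J \<subseteq> I \<or> I \<inter> J = {}" using nest by blast
    have mI: "\<forall>X\<in>N. I \<subseteq> X \<longrightarrow> X = I" using I unfolding K_def by simp
    have mJ: "\<forall>X\<in>N. J \<subseteq> X \<longrightarrow> X = J" using J unfolding K_def by simp
    show "I \<inter> J = {}" using c mI mJ ne \<open>I \<in> N\<close> \<open>J \<in> N\<close> by metis
  qed
  show False
  proof (cases "card K \<ge> 2")
    case True
    then show False using N3[THEN spec, of K] KN True fK disj UK assms(2) by simp
  next
    case False
    then have "card K = 0 \<or> card K = 1" by linarith
    then show False
    proof
      assume "card K = 0" then have "K = {}" using fK by simp
      then show False using UK Vne by simp
    next
      assume "card K = 1" then obtain M where "K = {M}" using card_1_singletonE by blast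
      then show False using UK KN assms(4) by auto
    qed
  qed
qed

end
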